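(* (1) The set $\{\mathbb{E}_\mathbf{I}\mid\mathbf{I}\in\mathcal{LP}_n\}$ is a complete set (i.e. summing to $1$) of central pairwise orthogonal idempotents of $bH_n(q)$. (2) For all $\mathbf{I},\mathbf{J}\in\mathcal{LP}_n$ one has $\mathbb{E}_\mathbf{I}\operatorname{E}_\mathbf{J}=\mathbb{E}_\mathbf{I}$ if $\mathbf{J}\preceq\mathbf{I}$, and $\mathbb{E}_\mathbf{I}\operatorname{E}_\mathbf{J}=0$ otherwise.
   Context: $\mathbb{S}=\mathbb{C}[q,q^{-1}]$. The tied--boxed Hecke algebra $bH_n(q)$ is the $\mathbb{S}$--algebra presented by generators $e_1,\dots,e_{n-1}$, $z_1,\dots,z_{n-1}$ and relations: $e_i^2=e_i$, $e_ie_j=e_je_i$; $z_iz_jz_i=z_jz_iz_j$ if $|i-j|=1$, $z_iz_j=z_jz_i$ if $|i-j|>1$; $e_iz_i=z_i$; $e_iz_j=z_je_i$; $z_i^2=e_i+(q-q^{-1})z_i$. $\mathcal{LP}_n$ is the set of linear set partitions of $[n]$ (all blocks intervals), ordered by $\mathbf{I}\preceq\mathbf{J}$ iff every block of $\mathbf{J}$ is a union of blocks of $\mathbf{I}$. For $\mathbf{I}\in\mathcal{LP}_n$, $\operatorname{E}_\mathbf{I}=\prod e_i$ over those $i$ with $i,i+1$ in the same block of $\mathbf{I}$. Let $|\mathbf{I}|$ be the number of blocks, $\mu(\mathbf{I},\mathbf{J})=(-1)^{|\mathbf{I}|-|\mathbf{J}|}$ if $\mathbf{I}\preceq\mathbf{J}$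 and $0$ otherwise, and $\mathbb{E}_\mathbf{I}=\sum_{\mathbf{J}\in\mathcal{LP}_n,\ \mathbf{J}\succeq\mathbf{I}}\mu(\mathbf{I},\mathbf{J})\operatorname{E}_\mathbf{J}$. *)

theory Defs
  imports Complex_Main "HOL-Library.Disjoint_Sets"
begin

definition LP :: "nat \<Rightarrow> nat set set set" where
  "LP n = {P. partition_on {1..n} P \<and> (\<forall>B\<in>P. \<exists>a b. B = {a..b})}"

definition lp_le :: "nat set set \<Rightarrow> nat set set \<Rightarrow> bool" where
  "lp_le I J \<longleftrightarrow> (\<forall>B\<in>J. \<exists>C\<subseteq>I. B = \<Union>C)"

definition E_lp :: "nat \<Rightarrow> (nat \<Rightarrow> 'a::ring_1) \<Rightarrow> nat set set \<Rightarrow> 'a" where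
  "E_lp n e I = prod_list (map e (filter (\<lambda>i. \<exists>B\<in>I. i \<in> B \<and> Suc i \<in> B) [1..<n]))"

definition mu_lp :: "nat set set \<Rightarrow> nat set set \<Rightarrow> 'a::ring_1" where
  "mu_lp I J = (if lp_le I J then (-1) ^ (card I - card J) else 0)"

definition EE_lp :: "nat \<Rightarrow> (nat \<Rightarrow> 'a::ring_1) \<Rightarrow> nat set set \<Rightarrow> 'a" where
  "EE_lp n e I = (\<Sum>J\<in>{J\<in>LP n. lp_le I J}. mu_lp I J * E_lp n e J)"

text \<open>Defining relations of the tied-boxed Hecke algebra bH_n(q) for elements e_i, z_i
  (1 \<le> i \<le> n-1) of a ring, with qi the inverse of q.\<close>
definition bH_rels :: "nat \<Rightarrow> 'a::ring_1 \<Rightarrow> 'a \<Rightarrow> (nat \<Rightarrow> 'a) \<Rightarrow> (nat \<Rightarrow> 'a) \<Rightarrow> bool" where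
  "bH_rels n q qi e z \<longleftrightarrow>
     (\<forall>i\<in>{1..<n}. \<forall>j\<in>{1..<n}.
        e i * e i = e i \<and>
        e i * e j = e j * e i \<and>
        ((i = Suc j \<or> j = Suc i) \<longrightarrow> z i * z j * z i = z j * z i * z j) \<and>
        ((Suc i < j \<or> Suc j < i) \<longrightarrow> z i * z j = z j * z i) \<and>
        e i * z i = z i \<and>
        e i * z j = z j * e i \<and>
        z i * z i = e i + (q - qi) * z i)"

text \<open>An S-algebra structure on a ring, S = C[q,q^{-1}]: a ring homomorphism from C into the
  centre together with a central unit q (with inverse qi).\<close>
definition S_algebra :: "(complex \<Rightarrow> 'a::ring_1) \<Rightarrow> 'a \<Rightarrow> 'a \<Rightarrow> bool" where
  "S_algebra phi q qi \<longleftrightarrow>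
     phi 1 = 1 \<and> (\<forall>a b. phi (a + b) = phi a + phi b) \<and> (\<forall>a b. phi (a * b) = phi a * phi b) \<and>
     (\<forall>a x. phi a * x = x * phi a) \<and>
     q * qi = 1 \<and> qi * q = 1 \<and> (\<forall>x. q * x = x * q)"

inductive_set gen_alg :: "nat \<Rightarrow> (complex \<Rightarrow> 'a::ring_1) \<Rightarrow> 'a \<Rightarrow> 'a \<Rightarrow> (nat \<Rightarrow> 'a) \<Rightarrow> (nat \<Rightarrow> 'a) \<Rightarrow> 'a set"
  for n phi q qi e z where
  scal: "phi c \<in> gen_alg n phi q qi e z"
| qq: "q \<in> gen_alg n phi q qi e z"
| qinv: "qi \<in> gen_alg n phi q qi e z"
| gen_e: "i \<in> {1..<n} \<Longrightarrow> e i \<in> gen_alg n phi q qi e z"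
| gen_z: "i \<in> {1..<n} \<Longrightarrow> z i \<in> gen_alg n phi q qi e z"
| add: "x \<in> gen_alg n phi q qi e z \<Longrightarrow> y \<in> gen_alg n phi q qi e z \<Longrightarrow> x + y \<in> gen_alg n phi q qi e z"
| mult: "x \<in> gen_alg n phi q qi e z \<Longrightarrow> y \<in> gen_alg n phi q qi e z \<Longrightarrow> x * y \<in> gen_alg n phi q qi e z"

end

theory Submission
  imports Defs
begin


definition Pf :: "(nat \<Rightarrow> 'a::ring_1) \<Rightarrow> nat list \<Rightarrow> nat set \<Rightarrow> 'a" where
  "Pf e xs S = prod_list (map (\<lambda>i. if i \<in> S then e i else 1 - e i) xs)"

lemma Pf_Nil[simp]: "Pf e [] S = 1" by (simp add: Pf_def)
lemma Pf_Cons: "Pf e (x # xs) S = (if x \<in> S then e x else 1 - e x) * Pf e xs S"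
  by (simp add: Pf_def)

lemma comm_prod_list: "(\<And>y. y \<in> set ys \<Longrightarrow> x * y = y * x) \<Longrightarrow> (x::'a::monoid_mult) * prod_list ys = prod_list ys * x"
proof (induction ys)
  case Nil then show ?case by simp
next
  case (Cons y ys)
  have "x * prod_list (y # ys) = (x * y) * prod_list ys" by (simp add: mult.assoc)
  also have "\<dots> = y * (x * prod_list ys)" using Cons by (simp add: mult.assoc)
  also have "\<dots> = prod_list (y # ys) * x" using Cons by (simp add: mult.assoc)
  finally show ?case .
qed

lemma comm_Pf:
  assumes "\<And>j. j \<in> set xs \<Longrightarrow> x * e j = e j * x"
  shows "x * Pf e xs S = Pf e xs S * x"
  unfolding Pf_def
proof (rule comm_prod_list)
  fix y assume "y \<in> set (map (\<lambda>i. if i \<in> S then e i else 1 - e i) xs)"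
  then obtain j where j: "j \<in> set xs" "y = (if j \<in> S then e j else 1 - e j)" by auto
  show "x * y = y * x" using assms[OF j(1)] j(2) by (auto simp: algebra_simps)
qed

lemma neg1_comm: "((-1::'a::ring_1) ^ k) * y = y * (-1) ^ k"
  by (cases "even k") simp_all

lemma neg1_comm2: "((-1::'a::ring_1) ^ k) * (y * z) = y * ((-1) ^ k * z)"
proof -
  have "((-1::'a) ^ k) * (y * z) = ((-1) ^ k * y) * z" by (simp only: mult.assoc)
  also have "\<dots> = (y * (-1) ^ k) * z" by (simp only: neg1_comm)
  also have "\<dots> = y * ((-1) ^ k * z)" by (simp only: mult.assoc)
  finally show ?thesis .
qed

lemma P1:
  assumes "distinct xs" "j \<in> set xs"
    and comm: "\<forall>i\<in>set xs. \<forall>k\<in>set xs. e i * e k = e k * e i"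
    and idem: "\<forall>i\<in>set xs. e i * e i = e i"
  shows "Pf e xs S * e j = (if j \<in> S then Pf e xs S else 0)"
  using assms
proof (induction xs)
  case Nil then show ?case by simp
next
  case (Cons x xs)
  define f where "f = (if x \<in> S then e x else 1 - e x)"
  have PC: "Pf e (x # xs) S = f * Pf e xs S" unfolding f_def by (simp add: Pf_Cons)
  show ?case
  proof (cases "j = x")
    case True
    have cm: "\<And>i k. i \<in> set (x # xs) \<Longrightarrow> k \<in> set (x # xs) \<Longrightarrow> e i * e k = e k * e i"
      using Cons.prems(3) by blast
    have c: "e x * Pf e xs S = Pf e xs S * e x"
      by (rule comm_Pf) (rule cm; simp)
    have ex: "e x * e x = e x" using Cons.prems(4) by simp
    have fx: "f * e x = (if x \<in> S then e x else 0)"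
      unfolding f_def using ex by (simp add: left_diff_distrib)
    have "Pf e (x # xs) S * e j = f * (Pf e xs S * e x)" using PC True by (simp add: mult.assoc)
    also have "\<dots> = (f * e x) * Pf e xs S" using c by (simp add: mult.assoc)
    also have "\<dots> = (if j \<in> S then Pf e (x # xs) S else 0)"
      using fx True PC unfolding f_def by simp
    finally show ?thesis .
  next
    case False
    then have j: "j \<in> set xs" using Cons.prems(2) by simp
    have "distinct xs" "\<forall>i\<in>set xs. \<forall>k\<in>set xs. e i * e k = e k * e i" "\<forall>i\<in>set xs. e i * e i = e i"
      using Cons.prems(1,3,4) by simp_all
    then have "Pf e xs S * e j = (if j \<in> S then Pf e xs S else 0)"
      using Cons.IH j by blast
    then show ?thesis using PC by (simp add: mult.assoc)
  qed
qed

lemma P3: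
  assumes "distinct xs" "set ys \<subseteq> set xs"
    and comm: "\<forall>i\<in>set xs. \<forall>k\<in>set xs. e i * e k = e k * e i"
    and idem: "\<forall>i\<in>set xs. e i * e i = e i"
  shows "Pf e xs S * Pf e ys S' = (if \<forall>y\<in>set ys. (y \<in> S) = (y \<in> S') then Pf e xs S else 0)"
  using assms(2)
proof (induction ys)
  case Nil then show ?case by simp
next
  case (Cons y ys)
  have y: "y \<in> set xs" using Cons.prems by auto
  have p1: "Pf e xs S * e y = (if y \<in> S then Pf e xs S else 0)" using P1[OF assms(1) y comm idem] .
  have p2: "Pf e xs S * (1 - e y) = (if y \<in> S then 0 else Pf e xs S)" using p1 by (simp add: algebra_simps)
  have "Pf e xs S * Pf e (y # ys) S' = (Pf e xs S * (if y \<in> S' then e y else 1 - e y)) * Pf e ys S'"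
    by (simp add: Pf_Cons mult.assoc)
  also have "\<dots> = (if (y \<in> S) = (y \<in> S') then Pf e xs S * Pf e ys S' else 0)"
    using p1 p2 by auto
  also have "\<dots> = (if \<forall>y\<in>set (y # ys). (y \<in> S) = (y \<in> S') then Pf e xs S else 0)"
    using Cons by auto
  finally show ?case .
qed

lemma P4:
  assumes "distinct xs" "set ys \<subseteq> set xs"
    and comm: "\<forall>i\<in>set xs. \<forall>k\<in>set xs. e i * e k = e k * e i"
    and idem: "\<forall>i\<in>set xs. e i * e i = e i"
  shows "Pf e xs S * prod_list (map e ys) = (if set ys \<subseteq> S then Pf e xs S else 0)"
  using assms(2)
proof (induction ys)
  case Nil then show ?case by simp
next
  case (Cons y ys)
  have y: "y \<in> set xs" using Cons.prems by auto
  have p1: "Pf e xs S * e y = (if y \<in> S then Pf e xs S else 0)" using P1[OF assms(1) y comm idem] .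
  have "Pf e xs S * prod_list (map e (y # ys)) = (Pf e xs S * e y) * prod_list (map e ys)"
    by (simp add: mult.assoc)
  also have "\<dots> = (if set (y # ys) \<subseteq> S then Pf e xs S else 0)"
    using p1 Cons by auto
  finally show ?case .
qed

lemma Pf_cong: "(\<And>i. i \<in> set xs \<Longrightarrow> (i \<in> S) = (i \<in> S')) \<Longrightarrow> Pf e xs S = Pf e xs S'"
  unfolding Pf_def by (rule arg_cong[where f=prod_list]) (rule map_cong, auto)

lemma Psum:
  assumes "distinct xs"
  shows "(\<Sum>S\<in>Pow (set xs). Pf e xs S) = 1"
  using assms
proof (induction xs)
  case Nil then show ?case by simp
next
  case (Cons x xs)
  have x: "x \<notin> set xs" using Cons.prems by simp
  have fin: "finite (Pow (set xs))" by simp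
  have inj: "inj_on (insert x) (Pow (set xs))" using x by (auto simp: inj_on_def) 
  have disj: "Pow (set xs) \<inter> insert x ` Pow (set xs) = {}" using x by auto
  have "(\<Sum>S\<in>Pow (set (x # xs)). Pf e (x # xs) S)
      = (\<Sum>S\<in>Pow (set xs). Pf e (x # xs) S) + (\<Sum>S\<in>insert x ` Pow (set xs). Pf e (x # xs) S)"
    by (simp add: Pow_insert sum.union_disjoint[OF fin _ disj])
  also have "(\<Sum>S\<in>insert x ` Pow (set xs). Pf e (x # xs) S) = (\<Sum>S\<in>Pow (set xs). Pf e (x # xs) (insert x S))"
    by (rule sum.reindex[OF inj, unfolded comp_def])
  also have "\<dots> = (\<Sum>S\<in>Pow (set xs). e x * Pf e xs S)"
  proof (rule sum.cong[OF refl])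
    fix S assume "S \<in> Pow (set xs)"
    have "Pf e xs (insert x S) = Pf e xs S" by (rule Pf_cong) (use x in auto)
    then show "Pf e (x # xs) (insert x S) = e x * Pf e xs S" by (simp add: Pf_Cons)
  qed
  also have "(\<Sum>S\<in>Pow (set xs). Pf e (x # xs) S) = (\<Sum>S\<in>Pow (set xs). (1 - e x) * Pf e xs S)"
    by (rule sum.cong[OF refl]) (use x in \<open>auto simp: Pf_Cons\<close>)
  finally have "(\<Sum>S\<in>Pow (set (x # xs)). Pf e (x # xs) S) =
     (\<Sum>S\<in>Pow (set xs). (1 - e x) * Pf e xs S) + (\<Sum>S\<in>Pow (set xs). e x * Pf e xs S)" .
  also have "\<dots> = (1 - e x) * (\<Sum>S\<in>Pow (set xs). Pf e xs S) + e x * (\<Sum>S\<in>Pow (set xs). Pf e xs S)"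
    by (simp only: sum_distrib_left)
  also have "\<dots> = 1" using Cons x by simp
  finally show ?case .
qed

lemma Pexp:
  assumes "distinct xs"
  shows "Pf e xs S = (\<Sum>T\<in>{T. S \<inter> set xs \<subseteq> T \<and> T \<subseteq> set xs}.
            (-1) ^ card (T - S) * prod_list (map e (filter (\<lambda>i. i \<in> T) xs)))"
  using assms
proof (induction xs)
  case Nil
  have "{T. S \<inter> set [] \<subseteq> T \<and> T \<subseteq> set []} = {{}}" by auto
  then show ?case by simp
next
  case (Cons x xs)
  have x: "x \<notin> set xs" using Cons.prems by simp
  define F where "F = {T. S \<inter> set xs \<subseteq> T \<and> T \<subseteq> set xs}"
  define g where "g = (\<lambda>T. (-1) ^ card (T - S) * prod_list (map e (filter (\<lambda>i. i \<in> T) (x # xs))))"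
  have finF: "finite F" unfolding F_def by (rule finite_subset[of _ "Pow (set xs)"]) auto
  have inj: "inj_on (insert x) F" using x unfolding F_def by (auto simp: inj_on_def)
  have IH: "Pf e xs S = (\<Sum>T\<in>F. (-1) ^ card (T - S) * prod_list (map e (filter (\<lambda>i. i \<in> T) xs)))"
    using Cons unfolding F_def by simp
  have f1: "filter (\<lambda>i. i \<in> T) (x # xs) = filter (\<lambda>i. i \<in> T) xs" if "T \<in> F" for T
    using that x unfolding F_def by auto
  have f2: "filter (\<lambda>i. i \<in> insert x T) (x # xs) = x # filter (\<lambda>i. i \<in> T) xs" if "T \<in> F" for T
    using that x unfolding F_def by (auto intro: filter_cong)
  have finT: "finite T" if "T \<in> F" for T using that unfolding F_def by (auto intro: finite_subset)
  have ins: "(\<Sum>T\<in>insert x ` F. g T) = (\<Sum>T\<in>F. e x * ((-1) ^ card (T - S) * prod_list (map e (filter (\<lambda>i. i \<in> T) xs))))"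
    if xS: "x \<in> S"
  proof -
    have "(\<Sum>T\<in>insert x ` F. g T) = (\<Sum>T\<in>F. g (insert x T))"
      by (rule sum.reindex[OF inj, unfolded comp_def])
    also have "\<dots> = (\<Sum>T\<in>F. e x * ((-1) ^ card (T - S) * prod_list (map e (filter (\<lambda>i. i \<in> T) xs))))"
    proof (rule sum.cong[OF refl])
      fix T assume T: "T \<in> F"
      have "insert x T - S = T - S" using xS by auto
      then show "g (insert x T) = e x * ((-1) ^ card (T - S) * prod_list (map e (filter (\<lambda>i. i \<in> T) xs)))"
        unfolding g_def using f2[OF T] by (simp add: neg1_comm2)
    qed
    finally show ?thesis .
  qed
  show ?case
  proof (cases "x \<in> S")
    case True
    have G: "{T. S \<inter> set (x # xs) \<subseteq> T \<and> T \<subseteq> set (x # xs)} = insert x ` F"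
    proof
      show "{T. S \<inter> set (x # xs) \<subseteq> T \<and> T \<subseteq> set (x # xs)} \<subseteq> insert x ` F"
      proof
        fix T assume T: "T \<in> {T. S \<inter> set (x # xs) \<subseteq> T \<and> T \<subseteq> set (x # xs)}"
        then have "T = insert x (T - {x})" "T - {x} \<in> F" using True x unfolding F_def by auto
        then show "T \<in> insert x ` F" by blast
      qed
      show "insert x ` F \<subseteq> {T. S \<inter> set (x # xs) \<subseteq> T \<and> T \<subseteq> set (x # xs)}"
        unfolding F_def by auto
    qed
    have "Pf e (x # xs) S = e x * Pf e xs S" using True by (simp add: Pf_Cons)
    also have "\<dots> = (\<Sum>T\<in>insert x ` F. g T)" using ins[OF True] IH by (simp add: sum_distrib_left)
    finally show ?thesis using G unfolding g_def by simp
  next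
    case False
    have G: "{T. S \<inter> set (x # xs) \<subseteq> T \<and> T \<subseteq> set (x # xs)} = F \<union> insert x ` F"
    proof
      show "{T. S \<inter> set (x # xs) \<subseteq> T \<and> T \<subseteq> set (x # xs)} \<subseteq> F \<union> insert x ` F"
      proof
        fix T assume T: "T \<in> {T. S \<inter> set (x # xs) \<subseteq> T \<and> T \<subseteq> set (x # xs)}"
        show "T \<in> F \<union> insert x ` F"
        proof (cases "x \<in> T")
          case True
          then have "T = insert x (T - {x})" "T - {x} \<in> F" using T False x unfolding F_def by auto
          then show ?thesis by blast
        next
          case xT: False
          then have "T \<in> F" using T False x unfolding F_def by auto
          then show ?thesis by blast
        qed
      qed
      show "F \<union> insert x ` F \<subseteq> {T. S \<inter> set (x # xs) \<subseteq> T \<and> T \<subseteq> set (x # xs)}"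
        unfolding F_def using False by auto
    qed
    have disj: "F \<inter> insert x ` F = {}" using x unfolding F_def by auto
    have s1: "(\<Sum>T\<in>F. g T) = Pf e xs S" using IH f1 unfolding g_def by simp
    have s2: "(\<Sum>T\<in>insert x ` F. g T) = - (e x * Pf e xs S)"
    proof -
      have "(\<Sum>T\<in>insert x ` F. g T) = (\<Sum>T\<in>F. g (insert x T))"
        by (rule sum.reindex[OF inj, unfolded comp_def])
      also have "\<dots> = (\<Sum>T\<in>F. - (e x * ((-1) ^ card (T - S) * prod_list (map e (filter (\<lambda>i. i \<in> T) xs)))))"
      proof (rule sum.cong[OF refl])
        fix T assume T: "T \<in> F"
        have "x \<notin> T" using T x unfolding F_def by auto
        then have "card (insert x T - S) = Suc (card (T - S))"
          using False finT[OF T] by (simp add: insert_Diff_if)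
        then show "g (insert x T) = - (e x * ((-1) ^ card (T - S) * prod_list (map e (filter (\<lambda>i. i \<in> T) xs))))"
          unfolding g_def using f2[OF T] by (simp add: neg1_comm2)
      qed
      also have "\<dots> = - (e x * Pf e xs S)" using IH by (simp add: sum_negf sum_distrib_left)
      finally show ?thesis .
    qed
    have "Pf e (x # xs) S = Pf e xs S - e x * Pf e xs S" using False by (simp add: Pf_Cons algebra_simps)
    also have "\<dots> = (\<Sum>T\<in>F \<union> insert x ` F. g T)"
      using s1 s2 by (simp add: sum.union_disjoint[OF finF _ disj] finF)
    finally show ?thesis using G unfolding g_def by simp
  qed
qed



definition RR :: "nat set \<Rightarrow> nat \<Rightarrow> nat \<Rightarrow> bool" where
  "RR T i j \<longleftrightarrow> (\<forall>k. min i j \<le> k \<and> k < max i j \<longrightarrow> k \<in> T)"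

definition blk :: "nat \<Rightarrow> nat set \<Rightarrow> nat \<Rightarrow> nat set" where
  "blk n T i = {j\<in>{1..n}. RR T i j}"

definition sig :: "nat \<Rightarrow> nat set set \<Rightarrow> nat set" where
  "sig n I = {i\<in>{1..<n}. \<exists>B\<in>I. i \<in> B \<and> Suc i \<in> B}"

definition blocks :: "nat \<Rightarrow> nat set \<Rightarrow> nat set set" where
  "blocks n T = blk n T ` {1..n}"

lemma RR_sym: "RR T i j \<Longrightarrow> RR T j i"
  unfolding RR_def by (simp add: min.commute max.commute)

lemma RR_refl: "RR T i i"
  unfolding RR_def by auto

lemma RR_trans: "RR T i m \<Longrightarrow> RR T m j \<Longrightarrow> RR T i j"
  unfolding RR_def
proof (intro allI impI)
  fix k assume a: "\<forall>k. min i m \<le> k \<and> k < max i m \<longrightarrow> k \<in> T"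
    "\<forall>k. min m j \<le> k \<and> k < max m j \<longrightarrow> k \<in> T" "min i j \<le> k \<and> k < max i j"
  have "(min i m \<le> k \<and> k < max i m) \<or> (min m j \<le> k \<and> k < max m j)"
    using a(3) by (auto simp: min_def max_def split: if_splits)
  then show "k \<in> T" using a(1,2) by blast
qed

lemma RR_mono: "RR T i j \<Longrightarrow> T \<subseteq> U \<Longrightarrow> RR U i j"
  unfolding RR_def by blast

lemma LP_unique: "I \<in> LP n \<Longrightarrow> B \<in> I \<Longrightarrow> B' \<in> I \<Longrightarrow> x \<in> B \<Longrightarrow> x \<in> B' \<Longrightarrow> B = B'"
  unfolding LP_def partition_on_def disjoint_def by blast

lemma LP_cover: "I \<in> LP n \<Longrightarrow> x \<in> {1..n} \<Longrightarrow> \<exists>B\<in>I. x \<in> B"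
  unfolding LP_def partition_on_def by blast

lemma LP_sub: "I \<in> LP n \<Longrightarrow> B \<in> I \<Longrightarrow> B \<subseteq> {1..n}"
  unfolding LP_def partition_on_def by blast

lemma LP_int: "I \<in> LP n \<Longrightarrow> B \<in> I \<Longrightarrow> \<exists>a b. B = {a..b}"
  unfolding LP_def by blast

lemma LP_ne: "I \<in> LP n \<Longrightarrow> B \<in> I \<Longrightarrow> B \<noteq> {}"
  unfolding LP_def partition_on_def by blast

lemma LP_fin: "I \<in> LP n \<Longrightarrow> B \<in> I \<Longrightarrow> finite B"
  by (rule finite_subset[OF LP_sub finite_atLeastAtMost])

lemma sig_sub: "sig n I \<subseteq> {1..<n}"
  unfolding sig_def by blast

lemma K1:
  assumes I: "I \<in> LP n" and B: "B \<in> I" and i: "i \<in> B"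
  shows "blk n (sig n I) i = B"
proof -
  obtain a b where ab: "B = {a..b}" using LP_int[OF I B] by blast
  have Bs: "B \<subseteq> {1..n}" using LP_sub[OF I B] .
  have ai: "a \<le> i" "i \<le> b" using i ab by auto
  have a1: "1 \<le> a" "b \<le> n" using Bs ab ai by auto
  show ?thesis
  proof
    show "blk n (sig n I) i \<subseteq> B"
    proof
      fix j assume j: "j \<in> blk n (sig n I) i"
      then have jn: "j \<in> {1..n}" and R: "RR (sig n I) i j" unfolding blk_def by auto
      show "j \<in> B"
      proof (rule ccontr)
        assume "j \<notin> B"
        then have "b < j \<or> j < a" using ab by auto
        then show False
        proof
          assume bj: "b < j"
          then have "b \<in> sig n I" using R ai unfolding RR_def by auto
          then obtain B' where B': "B' \<in> I" "b \<in> B'" "Suc b \<in> B'" unfolding sig_def by blast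
          have "B' = B" using LP_unique[OF I B' (1) B] B'(2) ab ai by auto
          then show False using B'(3) ab by auto
        next
          assume ja: "j < a"
          have R': "\<forall>k. j \<le> k \<and> k < i \<longrightarrow> k \<in> sig n I" using R ai ja unfolding RR_def by auto
          have "j \<le> a - 1" "a - 1 < i" using ja ai by auto
          then have "a - 1 \<in> sig n I" using R' by blast
          then obtain B' where B': "B' \<in> I" "a - 1 \<in> B'" "Suc (a - 1) \<in> B'" unfolding sig_def by blast
          have "Suc (a - 1) = a" using ja by auto
          then have "B' = B" using LP_unique[OF I B' (1) B] B'(3) ab ai by auto
          then show False using B'(2) ab ja by auto
        qed
      qed
    qed
  next
    show "B \<subseteq> blk n (sig n I) i"
    proof
      fix j assume j: "j \<in> B"
      have "RR (sig n I) i j" unfolding RR_def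
      proof (intro allI impI)
        fix k assume k: "min i j \<le> k \<and> k < max i j"
        have "k \<in> B" "Suc k \<in> B" using k j ab ai by auto
        moreover have "k \<in> {1..<n}" using k j ab ai a1 by auto
        ultimately show "k \<in> sig n I" unfolding sig_def using B by blast
      qed
      then show "j \<in> blk n (sig n I) i" unfolding blk_def using j Bs by auto
    qed
  qed
qed

lemma blk_self: "i \<in> {1..n} \<Longrightarrow> i \<in> blk n T i"
  unfolding blk_def by (simp add: RR_refl)

lemma blk_eq: "RR T i j \<Longrightarrow> blk n T i = blk n T j"
  unfolding blk_def using RR_trans RR_sym by blast

lemma K2:
  assumes T: "T \<subseteq> {1..<n}"
  shows "blocks n T \<in> LP n"
  unfolding LP_def
proof (intro CollectI conjI ballI)
  show "partition_on {1..n} (blocks n T)"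
  proof (rule partition_onI)
    show "\<Union> (blocks n T) = {1..n}"
    proof
      show "\<Union> (blocks n T) \<subseteq> {1..n}" unfolding blocks_def blk_def by auto
      show "{1..n} \<subseteq> \<Union> (blocks n T)" unfolding blocks_def using blk_self by blast
    qed
    show "{} \<notin> blocks n T" unfolding blocks_def using blk_self by blast
    fix p q assume p: "p \<in> blocks n T" and q: "q \<in> blocks n T" and pq: "p \<noteq> q"
    obtain i j where ij: "p = blk n T i" "q = blk n T j" using p q unfolding blocks_def by blast
    show "disjnt p q" unfolding disjnt_def
    proof (rule ccontr)
      assume "p \<inter> q \<noteq> {}"
      then obtain x where "x \<in> p" "x \<in> q" by blast
      then have "RR T i x" "RR T j x" using ij unfolding blk_def by auto
      then have "RR T i j" using RR_trans RR_sym by blast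
      then show False using pq ij blk_eq by metis
    qed
  qed
next
  fix B assume "B \<in> blocks n T"
  then obtain i where i: "i \<in> {1..n}" "B = blk n T i" unfolding blocks_def by blast
  have fin: "finite B" "B \<noteq> {}" using i blk_self[OF i(1)] unfolding blk_def by auto
  define a where "a = Min B"
  define b where "b = Max B"
  have aB: "a \<in> B" "b \<in> B" using fin a_def b_def by auto
  have "B = {a..b}"
  proof
    show "B \<subseteq> {a..b}" using fin a_def b_def by auto
    show "{a..b} \<subseteq> B"
    proof
      fix j assume j: "j \<in> {a..b}"
      have Ra: "RR T i a" "RR T i b" using aB i unfolding blk_def by auto
      then have Rab: "RR T a b" using RR_trans RR_sym by blast
      have ia: "a \<le> i" "i \<le> b" using i fin a_def b_def blk_self[OF i(1)] by auto
      have "RR T i j" unfolding RR_def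
      proof (intro allI impI)
        fix k assume "min i j \<le> k \<and> k < max i j"
        then have "min a b \<le> k \<and> k < max a b" using j ia by (auto simp: min_def max_def split: if_splits)
        then show "k \<in> T" using Rab unfolding RR_def by blast
      qed
      moreover have "j \<in> {1..n}" using aB j i unfolding blk_def by auto
      ultimately show "j \<in> B" using i unfolding blk_def by auto
    qed
  qed
  then show "\<exists>a b. B = {a..b}" by blast
qed

lemma K3:
  assumes T: "T \<subseteq> {1..<n}"
  shows "sig n (blocks n T) = T"
proof
  show "sig n (blocks n T) \<subseteq> T"
  proof
    fix i assume "i \<in> sig n (blocks n T)"
    then obtain m where m: "m \<in> {1..n}" "i \<in> blk n T m" "Suc i \<in> blk n T m"
      unfolding sig_def blocks_def by blast
    then have "RR T i (Suc i)" using RR_trans RR_sym unfolding blk_def by blast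
    then show "i \<in> T" unfolding RR_def by auto
  qed
  show "T \<subseteq> sig n (blocks n T)"
  proof
    fix i assume i: "i \<in> T"
    then have i1: "i \<in> {1..<n}" using T by auto
    have "RR T i (Suc i)" unfolding RR_def using i by (auto simp: less_Suc_eq)
    then have "i \<in> blk n T i" "Suc i \<in> blk n T i" using i1 unfolding blk_def by (auto simp: RR_refl)
    moreover have "blk n T i \<in> blocks n T" using i1 unfolding blocks_def by auto
    ultimately show "i \<in> sig n (blocks n T)" using i1 unfolding sig_def by blast
  qed
qed

lemma K4:
  assumes I: "I \<in> LP n"
  shows "blocks n (sig n I) = I"
proof
  show "blocks n (sig n I) \<subseteq> I"
    unfolding blocks_def using K1[OF I] LP_cover[OF I] by force
  show "I \<subseteq> blocks n (sig n I)"
  proof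
    fix B assume B: "B \<in> I"
    have "B \<noteq> {}" using I B unfolding LP_def partition_on_def by auto
    then obtain i where i: "i \<in> B" by blast
    then have "i \<in> {1..n}" using LP_sub[OF I B] by auto
    then show "B \<in> blocks n (sig n I)" using K1[OF I B i] unfolding blocks_def by blast
  qed
qed

lemma sig_inj: "inj_on (sig n) (LP n)"
  by (metis K4 inj_onI)

lemma sigI: "i \<in> {1..<n} \<Longrightarrow> B \<in> I \<Longrightarrow> i \<in> B \<Longrightarrow> Suc i \<in> B \<Longrightarrow> i \<in> sig n I"
  unfolding sig_def by blast

lemma sigE: "i \<in> sig n I \<Longrightarrow> (\<And>B. i \<in> {1..<n} \<Longrightarrow> B \<in> I \<Longrightarrow> i \<in> B \<Longrightarrow> Suc i \<in> B \<Longrightarrow> P) \<Longrightarrow> P"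
  unfolding sig_def by blast

lemma lp_leD: "lp_le I J \<Longrightarrow> B' \<in> J \<Longrightarrow> \<exists>C\<subseteq>I. B' = \<Union>C"
  unfolding lp_le_def by simp

lemma K5:
  assumes I: "I \<in> LP n" and J: "J \<in> LP n"
  shows "lp_le I J \<longleftrightarrow> sig n I \<subseteq> sig n J"
proof
  assume le: "lp_le I J"
  show "sig n I \<subseteq> sig n J"
  proof
    fix i assume "i \<in> sig n I"
    then obtain B where B: "i \<in> {1..<n}" "B \<in> I" "i \<in> B" "Suc i \<in> B" by (rule sigE)
    have "i \<in> {1..n}" using B(1) by simp
    then obtain B' where B': "B' \<in> J" "i \<in> B'" using LP_cover[OF J] by blast
    obtain C where C: "C \<subseteq> I" "B' = \<Union>C" using lp_leD[OF le B'(1)] by blast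
    have "i \<in> \<Union>C" using B'(2) C(2) by simp
    then obtain B'' where B'': "B'' \<in> C" "i \<in> B''" by (rule UnionE)
    have "B'' \<in> I" using C(1) B''(1) by (rule subsetD)
    then have "B'' = B" using LP_unique[OF I _ B(2) B''(2) B(3)] by simp
    then have "Suc i \<in> B''" using B(4) by simp
    then have "Suc i \<in> \<Union>C" using B''(1) by (rule UnionI[rotated])
    then have "Suc i \<in> B'" using C(2) by simp
    then show "i \<in> sig n J" using B(1) B'(1,2) by (intro sigI)
  qed
next
  assume sub: "sig n I \<subseteq> sig n J"
  show "lp_le I J" unfolding lp_le_def
  proof
    fix B' assume B': "B' \<in> J"
    have "B' = \<Union>{B\<in>I. B \<subseteq> B'}"
    proof
      show "B' \<subseteq> \<Union>{B\<in>I. B \<subseteq> B'}"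
      proof
        fix x assume x: "x \<in> B'"
        then have xn: "x \<in> {1..n}" using LP_sub[OF J B'] by (rule rev_subsetD)
        obtain B where B: "B \<in> I" "x \<in> B" using LP_cover[OF I xn] by blast
        have "B = blk n (sig n I) x" using K1[OF I B] by simp
        also have "\<dots> \<subseteq> blk n (sig n J) x"
        proof
          fix j assume "j \<in> blk n (sig n I) x"
          then have "j \<in> {1..n}" "RR (sig n I) x j" unfolding blk_def by simp_all
          then show "j \<in> blk n (sig n J) x" unfolding blk_def using RR_mono[OF _ sub] by simp
        qed
        also have "\<dots> = B'" using K1[OF J B' x] .
        finally have "B \<in> {B\<in>I. B \<subseteq> B'}" using B(1) by simp
        then show "x \<in> \<Union>{B\<in>I. B \<subseteq> B'}" using B(2) by (rule UnionI)
      qed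
      show "\<Union>{B\<in>I. B \<subseteq> B'} \<subseteq> B'" by (rule Union_least) simp
    qed
    moreover have "{B\<in>I. B \<subseteq> B'} \<subseteq> I" by (rule subsetI) simp
    ultimately show "\<exists>C\<subseteq>I. B' = \<Union>C" by blast
  qed
qed

lemma K6:
  assumes I: "I \<in> LP n"
  shows "card I = n - card (sig n I)"
proof -
  have img: "Max ` I = {1..n} - sig n I"
  proof
    show "Max ` I \<subseteq> {1..n} - sig n I"
    proof
      fix y assume "y \<in> Max ` I"
      then obtain B where B: "B \<in> I" "y = Max B" by blast
      obtain a b where ab: "B = {a..b}" using LP_int[OF I B(1)] by blast
      have "B \<noteq> {}" using LP_ne[OF I B(1)] .
      then have ab1: "a \<le> b" using ab by auto
      then have "Max B = b" using ab by (intro Max_eqI) auto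
      then have ab2: "a \<le> b" "y = b" using ab1 B by auto
      have yn: "y \<in> {1..n}" using LP_sub[OF I B(1)] ab ab2 by auto
      have "y \<notin> sig n I"
      proof
        assume "y \<in> sig n I"
        then obtain B' where B': "B' \<in> I" "y \<in> B'" "Suc y \<in> B'" unfolding sig_def by blast
        have "B' = B" using LP_unique[OF I B'(1) B(1)] B'(2) ab ab2 by auto
        then show False using B'(3) ab ab2 by auto
      qed
      then show "y \<in> {1..n} - sig n I" using yn by blast
    qed
    show "{1..n} - sig n I \<subseteq> Max ` I"
    proof
      fix i assume i: "i \<in> {1..n} - sig n I"
      obtain B where B: "B \<in> I" "i \<in> B" using LP_cover[OF I] i by blast
      obtain a b where ab: "B = {a..b}" using LP_int[OF I B(1)] by blast
      have bn: "b \<le> n" using LP_sub[OF I B(1)] ab B by auto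
      have "i = b"
      proof (rule ccontr)
        assume "i \<noteq> b"
        then have "i < b" using ab B by auto
        then have i1: "i \<in> {1..<n}" "Suc i \<in> B" using i B ab bn by auto
        then have "i \<in> sig n I" using B unfolding sig_def by blast
        then show False using i by blast
      qed
      moreover have "Max B = b" using ab B by (intro Max_eqI) auto
      ultimately show "i \<in> Max ` I" using B by blast
    qed
  qed
  have inj: "inj_on Max I"
  proof (rule inj_onI)
    fix B B' assume B: "B \<in> I" "B' \<in> I" "Max B = Max B'"
    have "Max B \<in> B" using Max_in[OF LP_fin[OF I B(1)] LP_ne[OF I B(1)]] .
    moreover have "Max B \<in> B'" using Max_in[OF LP_fin[OF I B(2)] LP_ne[OF I B(2)]] B(3) by simp
    ultimately show "B = B'" using LP_unique[OF I B(1,2)] by blast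
  qed
  have "card I = card (Max ` I)" using card_image[OF inj] by simp
  also have "\<dots> = n - card (sig n I)"
  proof -
    have fs: "finite (sig n I)" using finite_subset[OF sig_sub finite_atLeastLessThan] .
    have ss: "sig n I \<subseteq> {1..n}" using sig_sub[of n I] by auto
    show ?thesis unfolding img using card_Diff_subset[OF fs ss] by simp
  qed
  finally show ?thesis .
qed


lemma qi_comm:
  assumes "S_algebra phi q qi"
  shows "qi * x = x * qi"
proof -
  have q: "q * qi = 1" "qi * q = 1" "\<And>x. q * x = x * q" using assms unfolding S_algebra_def by auto
  have "qi * x = qi * x * (q * qi)" using q by simp
  also have "\<dots> = qi * (x * q) * qi" by (simp add: mult.assoc)
  also have "\<dots> = qi * (q * x) * qi" using q(3) by simp
  also have "\<dots> = (qi * q) * x * qi" by (simp add: mult.assoc)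
  also have "\<dots> = x * qi" using q by simp
  finally show ?thesis .
qed

lemma sig_bij: "bij_betw (sig n) (LP n) (Pow {1..<n})"
  unfolding bij_betw_def
proof
  show "inj_on (sig n) (LP n)" by (rule sig_inj)
  show "sig n ` LP n = Pow {1..<n}"
  proof
    show "sig n ` LP n \<subseteq> Pow {1..<n}" using sig_sub by blast
    show "Pow {1..<n} \<subseteq> sig n ` LP n"
    proof
      fix T assume "T \<in> Pow {1..<n}"
      then have T: "T \<subseteq> {1..<n}" by simp
      have "T = sig n (blocks n T)" using K3[OF T] by simp
      then show "T \<in> sig n ` LP n" using K2[OF T] by blast
    qed
  qed
qed

lemma sig_bij_up:
  assumes I: "I \<in> LP n"
  shows "bij_betw (sig n) {J\<in>LP n. lp_le I J} {T. sig n I \<inter> set [1..<n] \<subseteq> T \<and> T \<subseteq> set [1..<n]}"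
  unfolding bij_betw_def
proof
  show "inj_on (sig n) {J\<in>LP n. lp_le I J}" by (rule inj_on_subset[OF sig_inj]) blast
  show "sig n ` {J\<in>LP n. lp_le I J} = {T. sig n I \<inter> set [1..<n] \<subseteq> T \<and> T \<subseteq> set [1..<n]}"
  proof
    show "sig n ` {J\<in>LP n. lp_le I J} \<subseteq> {T. sig n I \<inter> set [1..<n] \<subseteq> T \<and> T \<subseteq> set [1..<n]}"
    proof
      fix T assume "T \<in> sig n ` {J\<in>LP n. lp_le I J}"
      then obtain J where J: "J \<in> LP n" "lp_le I J" "T = sig n J" by blast
      have "sig n I \<subseteq> sig n J" using K5[OF I J(1)] J(2) by simp
      then show "T \<in> {T. sig n I \<inter> set [1..<n] \<subseteq> T \<and> T \<subseteq> set [1..<n]}"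
        using J(3) sig_sub[of n J] by auto
    qed
    show "{T. sig n I \<inter> set [1..<n] \<subseteq> T \<and> T \<subseteq> set [1..<n]} \<subseteq> sig n ` {J\<in>LP n. lp_le I J}"
    proof
      fix T assume "T \<in> {T. sig n I \<inter> set [1..<n] \<subseteq> T \<and> T \<subseteq> set [1..<n]}"
      then have T: "T \<subseteq> {1..<n}" "sig n I \<subseteq> T" using sig_sub[of n I] by auto
      have eq: "T = sig n (blocks n T)" using K3[OF T(1)] by simp
      have B: "blocks n T \<in> LP n" using K2[OF T(1)] .
      have "lp_le I (blocks n T)" using K5[OF I B] T(2) eq by simp
      then show "T \<in> sig n ` {J\<in>LP n. lp_le I J}" using eq B by blast
    qed
  qed
qed

lemma E_form:
  "E_lp n e J = prod_list (map e (filter (\<lambda>i. i \<in> sig n J) [1..<n]))"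
  unfolding E_lp_def
  by (rule arg_cong[where f=prod_list], rule arg_cong[where f="map e"], rule filter_cong) (auto simp: sig_def)

lemma EE_form:
  assumes I: "I \<in> LP n"
  shows "EE_lp n e I = Pf e [1..<n] (sig n I)"
proof -
  have "EE_lp n e I = (\<Sum>J\<in>{J\<in>LP n. lp_le I J}.
      (-1) ^ card (sig n J - sig n I) * prod_list (map e (filter (\<lambda>i. i \<in> sig n J) [1..<n])))"
    unfolding EE_lp_def
  proof (rule sum.cong[OF refl])
    fix J assume "J \<in> {J\<in>LP n. lp_le I J}"
    then have J: "J \<in> LP n" "lp_le I J" by auto
    have sub: "sig n I \<subseteq> sig n J" using K5[OF I J(1)] J(2) by simp
    have fJ: "finite (sig n J)" using finite_subset[OF sig_sub finite_atLeastLessThan] .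
    have fI: "finite (sig n I)" using finite_subset[OF sig_sub finite_atLeastLessThan] .
    have cJ: "card (sig n J) \<le> n - 1"
      using card_mono[OF finite_atLeastLessThan sig_sub[of n J]] by simp
    have cI: "card (sig n I) \<le> card (sig n J)" using card_mono[OF fJ sub] .
    have "card I - card J = card (sig n J) - card (sig n I)"
      using K6[OF I] K6[OF J(1)] cJ cI by simp
    also have "\<dots> = card (sig n J - sig n I)" using card_Diff_subset[OF fI sub] by simp
    finally have "card I - card J = card (sig n J - sig n I)" .
    then show "mu_lp I J * E_lp n e J = (-1) ^ card (sig n J - sig n I) * prod_list (map e (filter (\<lambda>i. i \<in> sig n J) [1..<n]))"
      unfolding mu_lp_def E_form using J(2) by simp
  qed
  also have "\<dots> = (\<Sum>T\<in>{T. sig n I \<inter> set [1..<n] \<subseteq> T \<and> T \<subseteq> set [1..<n]}.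
      (-1) ^ card (T - sig n I) * prod_list (map e (filter (\<lambda>i. i \<in> T) [1..<n])))"
    by (rule sum.reindex_bij_betw[OF sig_bij_up[OF I]])
  also have "\<dots> = Pf e [1..<n] (sig n I)" by (rule Pexp[symmetric]) simp
  finally show ?thesis .
qed

theorem proposition5p8:
  fixes n :: nat and phi :: "complex \<Rightarrow> 'a::ring_1" and q qi :: 'a and e z :: "nat \<Rightarrow> 'a"
  assumes "S_algebra phi q qi"
    and "bH_rels n q qi e z"
  shows "(\<forall>I\<in>LP n. EE_lp n e I * EE_lp n e I = EE_lp n e I)
       \<and> (\<forall>I\<in>LP n. \<forall>J\<in>LP n. I \<noteq> J \<longrightarrow> EE_lp n e I * EE_lp n e J = 0)
       \<and> (\<forall>I\<in>LP n. \<forall>x\<in>gen_alg n phi q qi e z. EE_lp n e I * x = x * EE_lp n e I)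
       \<and> (\<Sum>I\<in>LP n. EE_lp n e I) = 1
       \<and> (\<forall>I\<in>LP n. \<forall>J\<in>LP n.
            EE_lp n e I * E_lp n e J = (if lp_le J I then EE_lp n e I else 0))"
proof -
  define xs where "xs = [1..<n]"
  have dxs: "distinct xs" unfolding xs_def by simp
  have sxs: "set xs = {1..<n}" unfolding xs_def by simp
  have comm: "\<forall>i\<in>set xs. \<forall>k\<in>set xs. e i * e k = e k * e i"
    using assms(2) unfolding bH_rels_def sxs by blast
  have idem: "\<forall>i\<in>set xs. e i * e i = e i"
    using assms(2) unfolding bH_rels_def sxs by blast
  have ez: "\<And>i j. i \<in> set xs \<Longrightarrow> j \<in> set xs \<Longrightarrow> e i * z j = z j * e i"
    using assms(2) unfolding bH_rels_def sxs by blast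
  have phic: "\<And>a x. phi a * x = x * phi a" and qc: "\<And>x. q * x = x * q"
    using assms(1) unfolding S_algebra_def by auto
  have qic: "\<And>x. qi * x = x * qi" using qi_comm[OF assms(1)] .
  have EE: "\<And>I. I \<in> LP n \<Longrightarrow> EE_lp n e I = Pf e xs (sig n I)"
    unfolding xs_def by (rule EE_form)
  have ssig: "\<And>I. sig n I \<subseteq> set xs" using sig_sub sxs by blast
  have P1: "\<forall>I\<in>LP n. EE_lp n e I * EE_lp n e I = EE_lp n e I"
    using EE P3[OF dxs _ comm idem, of xs] by simp
  have P2: "\<forall>I\<in>LP n. \<forall>J\<in>LP n. I \<noteq> J \<longrightarrow> EE_lp n e I * EE_lp n e J = 0"
  proof (intro ballI impI)
    fix I J assume IJ: "I \<in> LP n" "J \<in> LP n" "I \<noteq> J"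
    then have "sig n I \<noteq> sig n J" using sig_inj unfolding inj_on_def by blast
    then have "\<not> (\<forall>y\<in>set xs. (y \<in> sig n I) = (y \<in> sig n J))" using ssig[of I] ssig[of J] by blast
    then have "Pf e xs (sig n I) * Pf e xs (sig n J) = 0"
      using P3[OF dxs order.refl comm idem, where S="sig n I" and S'="sig n J"] by (simp only: if_False)
    then show "EE_lp n e I * EE_lp n e J = 0"
      using EE[OF IJ(1)] EE[OF IJ(2)] by simp
  qed
  have cen: "Pf e xs S * y = y * Pf e xs S" if "y \<in> gen_alg n phi q qi e z" for y S
    using that
  proof (induction y rule: gen_alg.induct)
    case (scal c) show ?case using phic by simp
  next
    case qq show ?case using qc by simp
  next
    case qinv show ?case using qic by simp
  next
    case (gen_e i)
    have "e i * Pf e xs S = Pf e xs S * e i"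
      by (rule comm_Pf) (use comm gen_e sxs in blast)
    then show ?case by simp
  next
    case (gen_z i)
    have "z i * Pf e xs S = Pf e xs S * z i"
      by (rule comm_Pf) (use ez gen_z sxs in metis)
    then show ?case by simp
  next
    case (add x y) then show ?case by (simp add: algebra_simps)
  next
    case (mult x y)
    have "Pf e xs S * (x * y) = (Pf e xs S * x) * y" by (simp add: mult.assoc)
    also have "\<dots> = x * (Pf e xs S * y)" using mult.IH(1) by (simp add: mult.assoc)
    also have "\<dots> = x * y * Pf e xs S" using mult.IH(2) by (simp add: mult.assoc)
    finally show ?case .
  qed
  have P3': "\<forall>I\<in>LP n. \<forall>x\<in>gen_alg n phi q qi e z. EE_lp n e I * x = x * EE_lp n e I"
    using EE cen by simp
  have P4': "(\<Sum>I\<in>LP n. EE_lp n e I) = 1"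
  proof -
    have "(\<Sum>I\<in>LP n. EE_lp n e I) = (\<Sum>I\<in>LP n. Pf e xs (sig n I))"
      using EE by (rule sum.cong[OF refl])
    also have "\<dots> = (\<Sum>S\<in>Pow {1..<n}. Pf e xs S)"
      by (rule sum.reindex_bij_betw[OF sig_bij])
    also have "\<dots> = 1" using Psum[OF dxs, of e] sxs by simp
    finally show ?thesis .
  qed
  have P5: "\<forall>I\<in>LP n. \<forall>J\<in>LP n. EE_lp n e I * E_lp n e J = (if lp_le J I then EE_lp n e I else 0)"
  proof (intro ballI)
    fix I J assume IJ: "I \<in> LP n" "J \<in> LP n"
    have st: "set (filter (\<lambda>i. i \<in> sig n J) xs) = sig n J" using ssig[of J] by auto
    have "EE_lp n e I * E_lp n e J = Pf e xs (sig n I) * prod_list (map e (filter (\<lambda>i. i \<in> sig n J) xs))"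
      using EE[OF IJ(1)] E_form[of n e J] unfolding xs_def by simp
    also have "\<dots> = (if sig n J \<subseteq> sig n I then Pf e xs (sig n I) else 0)"
      using P4[OF dxs _ comm idem, of "filter (\<lambda>i. i \<in> sig n J) xs" "sig n I"] st by simp
    also have "\<dots> = (if lp_le J I then EE_lp n e I else 0)"
      using K5[OF IJ(2) IJ(1)] EE[OF IJ(1)] by simp
    finally show "EE_lp n e I * E_lp n e J = (if lp_le J I then EE_lp n e I else 0)" .
  qed
  show ?thesis using P1 P2 P3' P4' P5 by blast
qed

end
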